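(* Let $T$ be a triangle from a shape-regular family ($h_T\le\varrho r_T$), $\Gamma_{h,T}$ an open line segment with endpoints on $\partial T$ dividing $T$ into nonempty open parts $T_h^\pm$, and $\mu^\pm>0$. There is a constant $C>0$ independent of $h_T$ and of the location of $\Gamma_{h,T}$ such that $$h_T\|[\![q_h^\pm]\!]\|^2_{L^2(\Gamma_{h,T})}\le C|\mathbf{v}_h|^2_{H^1(T)}\qquad\forall(\mathbf{v}_h,q_h)\in\mathbf{V}M_h^{IFE}(T),$$ where $[\![q_h^\pm]\!]=q_h^+-q_h^-$.
   Context: $\mathbf{n}_h$ is the unit normal of $\Gamma_{h,T}$ pointing into $T_h^+$; $\sigma(\mu,\mathbf{v},q)=2\mu\boldsymbol{\epsilon}(\mathbf{v})-q\mathbb{I}$, $\boldsymbol{\epsilon}(\mathbf{v})=\frac12(\nabla\mathbf{v}+(\nabla\mathbf{v})^T)$. $\mathbf{V}M_h^{IFE}(T)$ is the set of pairs $(\mathbf{v},q)$ equal to $(\mathbf{v}^\pm,q^\pm)$ on $T_h^\pm$, where $\mathbf{v}^\pm\in P_1(T)^2$, $q^\pm\in P_0(T)$ satisfy $\sigma(\mu^+,\mathbf{v}^+,q^+)\mathbf{n}_h=\sigma(\mu^-,\mathbf{v}^-,q^-)\mathbf{n}_h$, $\mathbf{v}^+=\mathbf{v}^-$ on $\Gamma_{h,T}$, $\nabla\cdot\mathbf{v}^+=\nabla\cdot\mathbf{v}^-$; $q_h^\pm$ denote the constant pieces of $q_h$. *)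

theory Defs
  imports "HOL-Analysis.Analysis"
begin

type_synonym pt = "real ^ 2"
type_synonym mat2 = "real ^ 2 ^ 2"

definition tri :: "pt \<Rightarrow> pt \<Rightarrow> pt \<Rightarrow> pt set" where
  "tri a b c = interior (convex hull {a, b, c})"

definition inradius :: "pt set \<Rightarrow> real" where
  "inradius T = Sup {r. \<exists>x. ball x r \<subseteq> T}"

text \<open>Symmetric gradient and Cauchy stress of an affine field with constant gradient A
  (A $ i $ j = d v_i / d x_j) and constant pressure q.\<close>
definition epsm :: "mat2 \<Rightarrow> mat2" where
  "epsm A = (1/2) *\<^sub>R (A + transpose A)"

definition sigma :: "real \<Rightarrow> mat2 \<Rightarrow> real \<Rightarrow> mat2" where
  "sigma mu A q = (2 * mu) *\<^sub>R epsm A - q *\<^sub>R mat 1"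

definition divm :: "mat2 \<Rightarrow> real" where
  "divm A = (\<Sum>i\<in>UNIV. A $ i $ i)"

definition frob2 :: "mat2 \<Rightarrow> real" where
  "frob2 A = (\<Sum>i\<in>UNIV. \<Sum>j\<in>UNIV. (A $ i $ j)^2)"

definition Tplus :: "pt set \<Rightarrow> pt \<Rightarrow> pt \<Rightarrow> pt set" where
  "Tplus T p n = {x \<in> T. n \<bullet> (x - p) > 0}"

definition Tminus :: "pt set \<Rightarrow> pt \<Rightarrow> pt \<Rightarrow> pt set" where
  "Tminus T p n = {x \<in> T. n \<bullet> (x - p) < 0}"

text \<open>IFE space: v = (A+ x + b+, q+) on T+, (A- x + b-, q-) on T-, with the jump conditions.\<close>
definition IFE :: "real \<Rightarrow> real \<Rightarrow> pt \<Rightarrow> pt \<Rightarrow> pt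
    \<Rightarrow> mat2 \<Rightarrow> pt \<Rightarrow> real \<Rightarrow> mat2 \<Rightarrow> pt \<Rightarrow> real \<Rightarrow> bool" where
  "IFE mup mum p q n Ap bp qp Am bm qm \<longleftrightarrow>
     sigma mup Ap qp *v n = sigma mum Am qm *v n \<and>
     (\<forall>x \<in> open_segment p q. Ap *v x + bp = Am *v x + bm) \<and>
     divm Ap = divm Am"

definition H1semi2 :: "pt set \<Rightarrow> pt \<Rightarrow> pt \<Rightarrow> mat2 \<Rightarrow> mat2 \<Rightarrow> real" where
  "H1semi2 T p n Ap Am =
     integral T (\<lambda>x. if n \<bullet> (x - p) > 0 then frob2 Ap else frob2 Am)"

definition jumpL2sq :: "pt \<Rightarrow> pt \<Rightarrow> real \<Rightarrow> real \<Rightarrow> real" where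
  "jumpL2sq p q qp qm = (qp - qm)^2 * dist p q"

end

theory Submission
  imports Defs
begin

lemma alg:
  fixes n :: pt and Ap Am :: mat2
  assumes "norm n = 1" "u \<noteq> 0" "n \<bullet> u = 0" "(Ap - Am) *v u = 0" "divm Ap = divm Am"
    "sigma mup Ap qp *v n = sigma mum Am qm *v n"
  shows "qp - qm = 2 * (mup - mum) * (n \<bullet> (Am *v n))"
    "n \<bullet> (Ap *v n) = n \<bullet> (Am *v n)"
proof -
  have nn: "(n$1)^2 + (n$2)^2 = 1" using assms(1)
    by (simp add: norm_eq_1 inner_vec_def sum_2 power2_eq_square)
  have u: "u$1 \<noteq> 0 \<or> u$2 \<noteq> 0" using assms(2) by (metis exhaust_2 vec_eq_iff zero_index)
  have nu: "n$1 * u$1 + n$2 * u$2 = 0" using assms(3) by (simp add: inner_vec_def sum_2)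
  have D1: "(Ap$1$1 - Am$1$1) * u$1 + (Ap$1$2 - Am$1$2) * u$2 = 0"
    using arg_cong[OF assms(4), of "\<lambda>v. v$1"] by (simp add: matrix_vector_mult_def sum_2)
  have D2: "(Ap$2$1 - Am$2$1) * u$1 + (Ap$2$2 - Am$2$2) * u$2 = 0"
    using arg_cong[OF assms(4), of "\<lambda>v. v$2"] by (simp add: matrix_vector_mult_def sum_2)
  have tr: "Ap$1$1 + Ap$2$2 = Am$1$1 + Am$2$2" using assms(5) by (simp add: divm_def sum_2)
  have S1: "sigma mup Ap qp $1 \<bullet> n = sigma mum Am qm $1 \<bullet> n"
    using arg_cong[OF assms(6), of "\<lambda>v. v$1"] by (simp add: matrix_vector_mult_def inner_vec_def)
  have S2: "sigma mup Ap qp $2 \<bullet> n = sigma mum Am qm $2 \<bullet> n"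
    using arg_cong[OF assms(6), of "\<lambda>v. v$2"] by (simp add: matrix_vector_mult_def inner_vec_def)
  have S1': "2*mup*(Ap$1$1 * n$1 + (Ap$1$2 + Ap$2$1)/2 * n$2) - qp * n$1
      = 2*mum*(Am$1$1 * n$1 + (Am$1$2 + Am$2$1)/2 * n$2) - qm * n$1"
    using S1 by (simp add: sigma_def epsm_def inner_vec_def sum_2 transpose_def mat_def field_simps)
  have S2': "2*mup*((Ap$1$2 + Ap$2$1)/2 * n$1 + Ap$2$2 * n$2) - qp * n$2
      = 2*mum*((Am$1$2 + Am$2$1)/2 * n$1 + Am$2$2 * n$2) - qm * n$2"
    using S2 by (simp add: sigma_def epsm_def inner_vec_def sum_2 transpose_def mat_def field_simps)
  define k where "k = n$1 * u$2 - n$2 * u$1"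
  have u1: "u$1 = - k * n$2" unfolding k_def using nn nu
    by algebra
  have u2: "u$2 = k * n$1" unfolding k_def using nn nu by algebra
  have k0: "k \<noteq> 0" using u u1 u2 by auto
  have t1: "-(Ap$1$1 - Am$1$1) * n$2 + (Ap$1$2 - Am$1$2) * n$1 = 0"
  proof -
    have "k * (-(Ap$1$1 - Am$1$1) * n$2 + (Ap$1$2 - Am$1$2) * n$1) = 0"
      using D1 unfolding u1 u2 by (simp add: algebra_simps)
    thus ?thesis using k0 by simp
  qed
  have t2: "-(Ap$2$1 - Am$2$1) * n$2 + (Ap$2$2 - Am$2$2) * n$1 = 0"
  proof -
    have "k * (-(Ap$2$1 - Am$2$1) * n$2 + (Ap$2$2 - Am$2$2) * n$1) = 0"
      using D2 unfolding u1 u2 by (simp add: algebra_simps)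
    thus ?thesis using k0 by simp
  qed
  have e1: "n \<bullet> (Ap *v n) = Ap$1$1*n$1*n$1 + Ap$1$2*n$1*n$2 + Ap$2$1*n$2*n$1 + Ap$2$2*n$2*n$2"
    by (simp add: inner_vec_def matrix_vector_mult_def sum_2 algebra_simps)
  have e2: "n \<bullet> (Am *v n) = Am$1$1*n$1*n$1 + Am$1$2*n$1*n$2 + Am$2$1*n$2*n$1 + Am$2$2*n$2*n$2"
    by (simp add: inner_vec_def matrix_vector_mult_def sum_2 algebra_simps)
  have eq: "n \<bullet> (Ap *v n) = n \<bullet> (Am *v n)"
    unfolding e1 e2 using t1 t2 tr nn by algebra
  show "n \<bullet> (Ap *v n) = n \<bullet> (Am *v n)" by (rule eq)
  show "qp - qm = 2 * (mup - mum) * (n \<bullet> (Am *v n))"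
    using eq unfolding e1 e2 using S1' S2' nn by algebra

qed
lemma cs4:
  fixes a b c d x y z w :: real
  shows "(a*x+b*y+c*z+d*w)^2 \<le> (a^2+b^2+c^2+d^2)*(x^2+y^2+z^2+w^2)"
proof -
  have "(a^2+b^2+c^2+d^2)*(x^2+y^2+z^2+w^2) - (a*x+b*y+c*z+d*w)^2
    = (a*y-b*x)^2 + (a*z-c*x)^2 + (a*w-d*x)^2 + (b*z-c*y)^2 + (b*w-d*y)^2 + (c*w-d*z)^2"
    by algebra
  moreover have "(a*y-b*x)^2 + (a*z-c*x)^2 + (a*w-d*x)^2 + (b*z-c*y)^2 + (b*w-d*y)^2 + (c*w-d*z)^2 \<ge> 0"
    by simp
  ultimately show ?thesis by linarith
qed

lemma quad_le_frob:
  fixes n :: pt and A :: mat2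
  assumes "norm n = 1"
  shows "(n \<bullet> (A *v n))^2 \<le> frob2 A"
proof -
  have nn: "(n$1)^2 + (n$2)^2 = 1" using assms
    by (simp add: norm_eq_1 inner_vec_def sum_2 power2_eq_square)
  have e: "n \<bullet> (A *v n) = A$1$1*(n$1*n$1) + A$1$2*(n$1*n$2) + A$2$1*(n$2*n$1) + A$2$2*(n$2*n$2)"
    by (simp add: inner_vec_def matrix_vector_mult_def sum_2 algebra_simps)
  have f: "frob2 A = (A$1$1)^2 + (A$1$2)^2 + (A$2$1)^2 + (A$2$2)^2"
    by (simp add: frob2_def sum_2)
  have one: "(n$1*n$1)^2 + (n$1*n$2)^2 + (n$2*n$1)^2 + (n$2*n$2)^2 = 1"
  proof -
    have "(n$1*n$1)^2 + (n$1*n$2)^2 + (n$2*n$1)^2 + (n$2*n$2)^2 = ((n$1)^2 + (n$2)^2)^2"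
      by algebra
    thus ?thesis using nn by simp
  qed
  show ?thesis unfolding e f using cs4[of "A$1$1" "n$1*n$1" "A$1$2" "n$1*n$2" "A$2$1" "n$2*n$1" "A$2$2" "n$2*n$2"] one
    by simp
qed

lemma H1_lower:
  fixes T :: "pt set"
  assumes "T \<in> lmeasurable"
  shows "min (frob2 Ap) (frob2 Am) * measure lebesgue T \<le> H1semi2 T p n Ap Am"
proof -
  define f where "f = (\<lambda>x::pt. if n \<bullet> (x - p) > 0 then frob2 Ap else frob2 Am)"
  define A where "A = T \<inter> {x. n \<bullet> x > n \<bullet> p}"
  define B where "B = T \<inter> {x. n \<bullet> x \<le> n \<bullet> p}"
  have Al: "A \<in> lmeasurable" unfolding A_def
    by (rule fmeasurable_Int_fmeasurable[OF assms]) (simp add: borel_open open_halfspace_gt)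
  have Bl: "B \<in> lmeasurable" unfolding B_def
    by (rule fmeasurable_Int_fmeasurable[OF assms]) (simp add: borel_closed closed_halfspace_le)
  have fA: "f integrable_on A"
    by (rule integrable_eq[OF integrable_on_const[OF Al, of "frob2 Ap"]]) (auto simp: f_def A_def inner_diff_right)
  have fB: "f integrable_on B"
    by (rule integrable_eq[OF integrable_on_const[OF Bl, of "frob2 Am"]]) (auto simp: f_def B_def inner_diff_right)
  have AB: "A \<inter> B = {}" unfolding A_def B_def by auto
  have fT: "f integrable_on T"
    by (rule integrable_Un'[OF fA fB]) (simp_all only: AB negligible_empty, auto simp: A_def B_def)
  have "integral T (\<lambda>x. min (frob2 Ap) (frob2 Am)) \<le> integral T f"
    by (rule integral_le[OF integrable_on_const[OF assms] fT]) (auto simp: f_def)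
  moreover have "integral T (\<lambda>x. min (frob2 Ap) (frob2 Am)) = min (frob2 Ap) (frob2 Am) * measure lebesgue T"
    using lmeasure_integral[OF assms] integral_mult_right[of T "min (frob2 Ap) (frob2 Am)" "\<lambda>x. 1"] by simp
  ultimately show ?thesis unfolding H1semi2_def f_def by simp
qed

lemma inradius_bound:
  fixes T :: "pt set"
  assumes "T \<in> lmeasurable" "inradius T \<ge> 0"
  shows "measure lborel (ball (0::pt) 1) * (inradius T)^2 \<le> measure lebesgue T"
proof -
  define c0 where "c0 = measure lborel (ball (0::pt) 1)"
  define M where "M = measure lebesgue T"
  have c0: "c0 > 0" unfolding c0_def by (rule content_ball_pos) simp
  have M0: "M \<ge> 0" unfolding M_def by simp
  have "inradius T \<le> sqrt (M / c0)" unfolding inradius_def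
  proof (rule cSup_least)
    show "{r. \<exists>x. ball x r \<subseteq> T} \<noteq> {}" proof -
      have "0 \<in> {r. \<exists>x. ball x r \<subseteq> T}" by simp
      thus ?thesis by blast
    qed
  next
    fix s assume "s \<in> {r. \<exists>x. ball x r \<subseteq> T}"
    then obtain x where x: "ball x s \<subseteq> T" by auto
    show "s \<le> sqrt (M / c0)"
    proof (cases "s \<le> 0")
      case True thus ?thesis by (meson order.trans real_sqrt_ge_zero M0 c0 divide_nonneg_pos less_imp_le)
    next
      case False
      have "measure lebesgue (ball x s) \<le> M" unfolding M_def
        by (rule measure_mono_fmeasurable[OF x _ assms(1)]) simp
      moreover have "measure lebesgue (ball x s) = s^2 * c0"
        using content_ball_conv_unit_ball[of s x] False unfolding c0_def by simp
      ultimately have "s^2 \<le> M / c0" using c0 by (simp add: field_simps)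
      thus ?thesis by (rule real_le_rsqrt)
    qed
  qed
  hence "(inradius T)^2 \<le> (sqrt (M / c0))^2" using assms(2) by (simp add: power_mono)
  also have "\<dots> = M / c0" using M0 c0 by simp
  finally show ?thesis using c0 unfolding c0_def[symmetric] M_def[symmetric] by (simp add: field_simps)
qed

lemma tri_props: "bounded (tri a b c)" "open (tri a b c)" "tri a b c \<in> lmeasurable"
proof -
  have "bounded (convex hull {a, b, c})"
    by (rule compact_imp_bounded, rule compact_convex_hull) simp
  thus bT: "bounded (tri a b c)" unfolding tri_def using bounded_subset interior_subset by blast
  show oT: "open (tri a b c)" unfolding tri_def by simp
  show "tri a b c \<in> lmeasurable" by (rule lmeasurable_open[OF bT oT])
qed

theorem lemma5p6:
  fixes \<rho> mup mum :: real
  assumes "\<rho> > 0" and "mup > 0" and "mum > 0"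
  shows "\<exists>C > 0. \<forall>a b c p q n Ap bp qp Am bm qm.
     \<not> affine_dependent {a, b, c} \<and>
     diameter (tri a b c) \<le> \<rho> * inradius (tri a b c) \<and>
     p \<in> frontier (tri a b c) \<and> q \<in> frontier (tri a b c) \<and> p \<noteq> q \<and>
     norm n = 1 \<and> n \<bullet> (q - p) = 0 \<and>
     Tplus (tri a b c) p n \<noteq> {} \<and> Tminus (tri a b c) p n \<noteq> {} \<and>
     IFE mup mum p q n Ap bp qp Am bm qm
     \<longrightarrow> diameter (tri a b c) * jumpL2sq p q qp qm
         \<le> C * H1semi2 (tri a b c) p n Ap Am"
proof -
  define K where "K = 4 * (mup - mum)^2"
  define c0 where "c0 = measure lborel (ball (0::pt) 1)"
  have c0: "c0 > 0" unfolding c0_def by (rule content_ball_pos) simp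
  have K0: "K \<ge> 0" unfolding K_def by simp
  have Cpos: "K * \<rho>^2 / c0 + 1 > 0" using K0 c0 assms(1) by (simp add: add_nonneg_pos)
  show ?thesis
  proof (rule exI[of _ "K * \<rho>^2 / c0 + 1"], intro conjI allI impI, rule Cpos)
    fix a b c p q n Ap bp qp Am bm qm
    assume H: "\<not> affine_dependent {a, b, c} \<and>
     diameter (tri a b c) \<le> \<rho> * inradius (tri a b c) \<and>
     p \<in> frontier (tri a b c) \<and> q \<in> frontier (tri a b c) \<and> p \<noteq> q \<and>
     norm n = 1 \<and> n \<bullet> (q - p) = 0 \<and>
     Tplus (tri a b c) p n \<noteq> {} \<and> Tminus (tri a b c) p n \<noteq> {} \<and>
     IFE mup mum p q n Ap bp qp Am bm qm"
    define T where "T = tri a b c"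
    have bT: "bounded T" and lT: "T \<in> lmeasurable" unfolding T_def using tri_props by auto
    define d where "d = diameter T"
    define r where "r = inradius T"
    define M where "M = measure lebesgue T"
    define m where "m = min (frob2 Ap) (frob2 Am)"
    define J where "J = (qp - qm)^2"
    have d0: "d \<ge> 0" unfolding d_def by (rule diameter_ge_0[OF bT])
    have dr: "d \<le> \<rho> * r" using H unfolding d_def r_def T_def by simp
    have r0: "r \<ge> 0" using d0 dr assms(1) by (smt (verit) mult_pos_neg)
    have pq: "p \<in> closure T" "q \<in> closure T" using H unfolding T_def frontier_def by auto
    have dpq: "dist p q \<le> d"
      using diameter_bounded_bound[OF bounded_closure[OF bT] pq] diameter_closure[OF bT]
      unfolding d_def by simp
    have dist0: "dist p q \<ge> 0" by simp
    have rM: "c0 * r^2 \<le> M" unfolding c0_def r_def M_def by (rule inradius_bound[OF lT r0[unfolded r_def]])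
    have mH: "m * M \<le> H1semi2 T p n Ap Am" unfolding m_def M_def by (rule H1_lower[OF lT])
    have m0: "m \<ge> 0" unfolding m_def by (simp add: frob2_def sum_nonneg)
    have M0: "M \<ge> 0" unfolding M_def by simp
    have n1: "norm n = 1" and nqp: "n \<bullet> (q - p) = 0" and pq': "p \<noteq> q"
      and ife: "IFE mup mum p q n Ap bp qp Am bm qm" using H by auto
    define x1 where "x1 = (1 - 1/3) *\<^sub>R p + (1/3) *\<^sub>R q"
    define x2 where "x2 = (1 - 2/3) *\<^sub>R p + (2/3) *\<^sub>R q"
    have x1: "x1 \<in> open_segment p q" unfolding x1_def in_segment using pq'
      by (intro conjI exI[of _ "1/3"]) auto
    have x2: "x2 \<in> open_segment p q" unfolding x2_def in_segment using pq'
      by (intro conjI exI[of _ "2/3"]) auto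
    have e1: "Ap *v x1 + bp = Am *v x1 + bm" and e2: "Ap *v x2 + bp = Am *v x2 + bm"
      using ife x1 x2 unfolding IFE_def by auto
    have "Ap *v (x2 - x1) = Am *v (x2 - x1)"
    proof -
      from e1 e2 have "(Ap *v x2 + bp) - (Ap *v x1 + bp) = (Am *v x2 + bm) - (Am *v x1 + bm)" by simp
      thus ?thesis by (simp add: matrix_vector_mult_diff_distrib)
    qed
    moreover have "x2 - x1 = (1/3) *\<^sub>R (q - p)" unfolding x1_def x2_def by (simp add: vec_eq_iff field_simps)
    ultimately have "(1/3) *\<^sub>R (Ap *v (q - p)) = (1/3) *\<^sub>R (Am *v (q - p))"
      by (simp add: matrix_vector_mult_scaleR)
    hence "(Ap - Am) *v (q - p) = 0" by (simp add: matrix_vector_mult_diff_rdistrib)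
    moreover have "q - p \<noteq> 0" using pq' by simp
    moreover have "divm Ap = divm Am" "sigma mup Ap qp *v n = sigma mum Am qm *v n"
      using ife unfolding IFE_def by auto
    ultimately have A1: "qp - qm = 2 * (mup - mum) * (n \<bullet> (Am *v n))"
      and A2: "n \<bullet> (Ap *v n) = n \<bullet> (Am *v n)"
      using alg[OF n1 _ nqp] by blast+
    have "J = K * (n \<bullet> (Am *v n))^2" unfolding J_def K_def A1 by (simp add: power_mult_distrib power2_eq_square algebra_simps)
    hence JK: "J \<le> K * m"
      using quad_le_frob[OF n1, of Am] quad_le_frob[OF n1, of Ap] A2 K0 unfolding m_def
      by (simp add: mult_left_mono)
    have "d * jumpL2sq p q qp qm = d * (J * dist p q)" unfolding jumpL2sq_def J_def by simp
    also have "\<dots> \<le> d * (J * d)"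
      using dpq d0 by (simp add: mult_left_mono J_def)
    also have "\<dots> \<le> d^2 * (K * m)"
    proof -
      have "J * (d * d) \<le> (K * m) * (d * d)" using JK d0 by (intro mult_right_mono) auto
      thus ?thesis by (simp add: power2_eq_square algebra_simps)
    qed
    also have "\<dots> \<le> (\<rho> * r)^2 * (K * m)"
      using dr d0 K0 m0 by (intro mult_right_mono power_mono) auto
    also have "\<dots> = \<rho>^2 * K * m / c0 * (c0 * r^2)" using c0 by (simp add: field_simps power_mult_distrib)
    also have "\<dots> \<le> \<rho>^2 * K * m / c0 * M"
      using rM c0 K0 m0 by (intro mult_left_mono) auto
    also have "\<dots> = (K * \<rho>^2 / c0) * (m * M)" by (simp add: field_simps)
    also have "\<dots> \<le> (K * \<rho>^2 / c0) * H1semi2 T p n Ap Am"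
      using mH K0 c0 by (intro mult_left_mono) auto
    also have "\<dots> \<le> (K * \<rho>^2 / c0 + 1) * H1semi2 T p n Ap Am"
      using mH m0 M0 by (simp add: distrib_right) (meson order.trans mult_nonneg_nonneg)
    finally show "diameter (tri a b c) * jumpL2sq p q qp qm
         \<le> (K * \<rho>^2 / c0 + 1) * H1semi2 (tri a b c) p n Ap Am"
      unfolding d_def T_def .
  qed
qed

end
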